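(* Let $d\ge 1$ and consider the linear hyperbolic system $\partial_t \mathbf{u} + \sum_{i=1}^{d} A_i \partial_{x_i}\mathbf{u} = 0$ on $\prod_{i=1}^d[0,1]$ with periodic boundary conditions, where the $A_i$ are real constant matrices such that every real linear combination $\sum_i \alpha_i A_i$ is diagonalizable with real eigenvalues. Let $\mathcal{L}$ be a linear finite difference scheme for this system on the uniform grid with $\Delta x_j = 1/N_j$, with Fourier symbol matrix $Q_{\mathcal{L}}(\mathbf{k})$, let $Q_{\mathcal{L}^*}(\mathbf{k})$ be the Fourier symbol matrix of the backward scheme $\mathcal{L}^*$, and let $Q_B(\mathbf{k}) = Q_{\mathcal{L}}(\mathbf{k})\left(I + \tfrac12\left(I - Q_{\mathcal{L}^*}(\mathbf{k})Q_{\mathcal{L}}(\mathbf{k})\right)\right)$ be the Fourier symbol matrix of the BFECC scheme based on $\mathcal{L}$. Suppose that for all $\mathbf{k}\in\mathcal{F}_{\mathbf{N}}$: (1) $Q_{\mathcal{L}^*}(\mathbf{k}) = \overline{Q_{\mathcal{L}}(\mathbf{k})}$ (entrywise complex conjugate); (2) $Q_{\mathcal{L}^*}(\mathbf{k})Q_{\mathcal{L}}(\mathbf{k}) = Q_{\mathcal{L}}(\mathbf{k})Q_{\mathcal{L}^*}(\mathbf{k})$; (3) $\mathrm{Re}(Q_{\mathcal{L}}(\mathbf{k}))$ and $\mathrm{Im}(Q_{\mathcal{L}}(\mathbf{k}))$ (entrywise real and imaginary parts) are diagonalizable with real eigenvalues. Then $|\rho(Q_B(\mathbf{k}))| \le 1$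 for all $\mathbf{k}\in\mathcal{F}_{\mathbf{N}}$ if and only if $|\rho(Q_{\mathcal{L}}(\mathbf{k}))|\le 2$ for all $\mathbf{k}\in\mathcal{F}_{\mathbf{N}}$, where $\rho$ denotes spectral radius.
   Context: Grid: $\mathbf{N}=(N_1,\dots,N_d)$, grid indices $\mathbf{j}\in\mathcal{D}_{\mathbf{N}}=\mathbb{Z}^d\cap\prod_i[0,N_i-1]$, grid points $\mathbf{x}_{\mathbf{j}}=(j_1\Delta x_1,\dots,j_d\Delta x_d)$, numerical solution $\mathbf{U}^n_{\mathbf{j}}\approx \mathbf{u}(\mathbf{x}_{\mathbf{j}},t_n)$, and $\mathbf{U}^{n+1}=\mathcal{L}\mathbf{U}^n$ with $\mathcal{L}$ linear. Dual index set $\mathcal{F}_{\mathbf{N}}=\mathbb{Z}^d\cap\prod_i[1-N_i,N_i-1]$. Writing $\mathbf{U}^n_{\mathbf{j}}=\sum_{\mathbf{k}\in\mathcal{F}_{\mathbf{N}}}\mathbf{C}^n_{\mathbf{k}}e^{2\pi i\mathbf{k}\cdot\mathbf{x}_{\mathbf{j}}}$, linearity gives $\mathbf{C}^{n+1}_{\mathbf{k}}=Q_{\mathcal{L}}(\mathbf{k})\mathbf{C}^n_{\mathbf{k}}$; $Q_{\mathcal{L}}(\mathbf{k})$ is the Fourier symbol matrix. The backward scheme $\mathcal{L}^*$ is the scheme $\mathcal{L}$ applied to the time-reversed system $\partial_t\mathbf{u}-\sum_i A_i\partial_{x_i}\mathbf{u}=0$. The BFECC scheme based on $\mathcal{L}$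 updates $\mathbf{U}^n$ by: $\tilde{\mathbf{U}}^{n+1}=\mathcal{L}\mathbf{U}^n$; $\tilde{\mathbf{U}}^n=\mathcal{L}^*\tilde{\mathbf{U}}^{n+1}$; $\mathbf{U}^{n+1}=\mathcal{L}(\mathbf{U}^n+\tfrac12(\mathbf{U}^n-\tilde{\mathbf{U}}^n))$; its Fourier symbol matrix is $Q_B$ as given. *)

theory Defs
  imports "HOL-Analysis.Analysis" "Jordan_Normal_Form.Spectral_Radius"
begin

definition real_diagonalizable :: "nat \<Rightarrow> real mat \<Rightarrow> bool" where
  "real_diagonalizable n R \<longleftrightarrow> R \<in> carrier_mat n n \<and> (\<exists>D. diagonal_mat D \<and> similar_mat R D)"

definition dual_index_set :: "nat list \<Rightarrow> int list set" where
  "dual_index_set N = {k. length k = length N \<and>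
      (\<forall>i<length N. 1 - int (N ! i) \<le> k ! i \<and> k ! i \<le> int (N ! i) - 1)}"

definition conj_mat :: "complex mat \<Rightarrow> complex mat" where
  "conj_mat A = map_mat cnj A"

definition re_mat :: "complex mat \<Rightarrow> real mat" where
  "re_mat A = map_mat Re A"

definition im_mat :: "complex mat \<Rightarrow> real mat" where
  "im_mat A = map_mat Im A"

definition bfecc_symbol :: "nat \<Rightarrow> complex mat \<Rightarrow> complex mat \<Rightarrow> complex mat" where
  "bfecc_symbol m QL QLs = QL * (1\<^sub>m m + (1/2 :: complex) \<cdot>\<^sub>m (1\<^sub>m m - QLs * QL))"

definition hyperbolic_system :: "nat \<Rightarrow> nat \<Rightarrow> (nat \<Rightarrow> real mat) \<Rightarrow> bool" where
  "hyperbolic_system d m A \<longleftrightarrow> (\<forall>i<d. A i \<in> carrier_mat m m) \<and>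
     (\<forall>\<alpha> :: nat \<Rightarrow> real. real_diagonalizable m (mat m m (\<lambda>(r, c). \<Sum>i<d. \<alpha> i * A i $$ (r, c))))"

end

theory Submission
  imports Defs
begin

fun iterA :: "complex mat \<Rightarrow> complex list \<Rightarrow> complex vec \<Rightarrow> complex vec" where
  "iterA A [] v = v"
| "iterA A (a # as) v = A *\<^sub>v iterA A as v - a \<cdot>\<^sub>v iterA A as v"

lemma iterA_carrier: "A \<in> carrier_mat m m \<Longrightarrow> v \<in> carrier_vec m \<Longrightarrow> iterA A as v \<in> carrier_vec m"
  by (induction as) auto

lemma iterA_V: assumes "A \<in> carrier_mat m m" "v \<in> carrier_vec m" "V v"
  "\<And>u a. u \<in> carrier_vec m \<Longrightarrow> V u \<Longrightarrow> V (A *\<^sub>v u - a \<cdot>\<^sub>v u)"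
  shows "V (iterA A as v)"
  using assms by (induction as) (auto simp: iterA_carrier)

lemma vec_minus_zero: assumes "x \<in> carrier_vec m" "y \<in> carrier_vec m" "x - y = (0\<^sub>v m :: complex vec)"
  shows "x = y"
proof (rule eq_vecI)
  fix i assume "i < dim_vec y"
  then have i: "i < m" using assms by simp
  have "(x - y) $ i = 0" using assms i by simp
  moreover have "(x - y) $ i = x $ i - y $ i" using assms(1,2) i by simp
  ultimately show "x $ i = y $ i" by simp
qed (use assms in auto)

lemma extract_eig:
  assumes A: "A \<in> carrier_mat m m" and v: "v \<in> carrier_vec m" "v \<noteq> 0\<^sub>v m" "V v"
   and cl: "\<And>u a. u \<in> carrier_vec m \<Longrightarrow> V u \<Longrightarrow> V (A *\<^sub>v u - a \<cdot>\<^sub>v u)"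
   and z: "iterA A as v = 0\<^sub>v m"
  shows "\<exists>a\<in>set as. \<exists>w. w \<in> carrier_vec m \<and> w \<noteq> 0\<^sub>v m \<and> V w \<and> A *\<^sub>v w = a \<cdot>\<^sub>v w"
  using z
proof (induction as)
  case Nil then show ?case using v by simp
next
  case (Cons a as)
  define u where "u = iterA A as v"
  have u: "u \<in> carrier_vec m" "V u" using iterA_carrier[OF A v(1)] iterA_V[OF A v(1) v(3) cl]
    by (auto simp: u_def)
  show ?case
  proof (cases "u = 0\<^sub>v m")
    case True then show ?thesis using Cons.IH u_def by auto
  next
    case False
    have "A *\<^sub>v u - a \<cdot>\<^sub>v u = 0\<^sub>v m" using Cons.prems u_def by simp
    then have "A *\<^sub>v u = a \<cdot>\<^sub>v u" using vec_minus_zero[of "A *\<^sub>v u" m "a \<cdot>\<^sub>v u"] u A by auto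
    then show ?thesis using u False by auto
  qed
qed

lemma diag_mult_vec: assumes D: "D \<in> carrier_mat m m" "diagonal_mat D" and u: "u \<in> carrier_vec m"
  and i: "i < m"
  shows "(D *\<^sub>v u) $ i = D $$ (i,i) * u $ i"
proof -
  have "(D *\<^sub>v u) $ i = (\<Sum>j\<in>{0..<m}. D $$ (i,j) * u $ j)"
    using D u i by (simp add: mult_mat_vec_def scalar_prod_def)
  also have "\<dots> = (\<Sum>j\<in>{0..<m}. if j = i then D $$ (i,i) * u $ i else 0)"
    by (rule sum.cong, insert D i, auto simp: diagonal_mat_def)
  also have "\<dots> = D $$ (i,i) * u $ i" using i by simp
  finally show ?thesis .
qed

lemma iterA_diag: assumes D: "D \<in> carrier_mat m m" "diagonal_mat D" and w: "w \<in> carrier_vec m"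
  and i: "i < m"
  shows "iterA D as w $ i = (\<Prod>a\<leftarrow>as. (D $$ (i,i) - a)) * w $ i"
proof (induction as)
  case Nil then show ?case by simp
next
  case (Cons a as)
  have c: "iterA D as w \<in> carrier_vec m" using iterA_carrier[OF D(1) w] .
  show ?case using Cons c i diag_mult_vec[OF D c i] D by (simp add: algebra_simps)
qed

lemma ann_diag: assumes D: "D \<in> carrier_mat m m" "diagonal_mat D" and w: "w \<in> carrier_vec m"
  shows "iterA D (map (\<lambda>i. D $$ (i,i)) [0..<m]) w = 0\<^sub>v m"
proof (rule eq_vecI)
  fix i assume "i < dim_vec (0\<^sub>v m :: complex vec)"
  then have i: "i < m" by simp
  have "(\<Prod>a\<leftarrow>map (\<lambda>i. D $$ (i,i)) [0..<m]. (D $$ (i,i) - a)) = 0"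
    using i by (auto simp: prod_list_zero_iff)
  then show "iterA D (map (\<lambda>i. D $$ (i,i)) [0..<m]) w $ i = 0\<^sub>v m $ i"
    using iterA_diag[OF D w i] i by simp
qed (use iterA_carrier[OF D(1) w] in auto)

lemma iterA_sim: assumes P: "P \<in> carrier_mat m m" and Q: "Q \<in> carrier_mat m m" and D: "D \<in> carrier_mat m m"
  and QP: "Q * P = 1\<^sub>m m" and PQ: "P * Q = 1\<^sub>m m" and v: "v \<in> carrier_vec m"
  shows "iterA (P * D * Q) as v = P *\<^sub>v iterA D as (Q *\<^sub>v v)"
proof (induction as)
  case Nil
  have "P *\<^sub>v (Q *\<^sub>v v) = (P * Q) *\<^sub>v v" using assoc_mult_mat_vec[OF P Q v] by simp
  also have "\<dots> = v" unfolding PQ using v by simp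
  finally show ?case by simp
next
  case (Cons a as)
  define x where "x = iterA D as (Q *\<^sub>v v)"
  have x: "x \<in> carrier_vec m" unfolding x_def using iterA_carrier[OF D] Q v by auto
  have PD: "P * D \<in> carrier_mat m m" using P D by simp
  have Px: "P *\<^sub>v x \<in> carrier_vec m" using P x by simp
  have "(P * D * Q) *\<^sub>v (P *\<^sub>v x) = (P * D) *\<^sub>v (Q *\<^sub>v (P *\<^sub>v x))"
    by (rule assoc_mult_mat_vec[OF PD Q Px])
  also have "Q *\<^sub>v (P *\<^sub>v x) = (Q * P) *\<^sub>v x" using assoc_mult_mat_vec[OF Q P x] by simp
  also have "\<dots> = x" unfolding QP using x by simp
  also have "(P * D) *\<^sub>v x = P *\<^sub>v (D *\<^sub>v x)" by (rule assoc_mult_mat_vec[OF P D x])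
  finally have e: "(P * D * Q) *\<^sub>v (P *\<^sub>v x) = P *\<^sub>v (D *\<^sub>v x)" .
  have "iterA (P * D * Q) (a # as) v = P *\<^sub>v (D *\<^sub>v x) - a \<cdot>\<^sub>v (P *\<^sub>v x)"
    using Cons e by (simp add: x_def)
  also have "\<dots> = P *\<^sub>v (D *\<^sub>v x) - P *\<^sub>v (a \<cdot>\<^sub>v x)" using P x by (simp add: mult_mat_vec)
  also have "\<dots> = P *\<^sub>v (D *\<^sub>v x - a \<cdot>\<^sub>v x)"
    using P D x by (simp add: mult_minus_distrib_mat_vec[of P m m])
  finally show ?case by (simp add: x_def)
qed

lemma ann_real_diag: assumes "real_diagonalizable m R"
  shows "\<exists>as. (\<forall>a\<in>set as. Im a = 0) \<and>
     (\<forall>v\<in>carrier_vec m. iterA (map_mat complex_of_real R) as v = 0\<^sub>v m)"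
proof -
  from assms obtain D where R: "R \<in> carrier_mat m m" and D: "diagonal_mat D" "similar_mat R D"
    unfolding real_diagonalizable_def by auto
  from similar_matD[OF D(2)] obtain n P Q where
    w: "{R, D, P, Q} \<subseteq> carrier_mat n n" "P * Q = 1\<^sub>m n" "Q * P = 1\<^sub>m n" "R = P * D * Q" by blast
  have n: "n = m" using w R by auto
  let ?h = "map_mat complex_of_real"
  have PQ: "P \<in> carrier_mat m m" "Q \<in> carrier_mat m m" "D \<in> carrier_mat m m" using w n by auto
  have "?h (P * D * Q) = ?h (P * D) * ?h Q"
    using PQ by (intro of_real_hom.mat_hom_mult[of _ m m _ m]) auto
  also have "?h (P * D) = ?h P * ?h D"
    using PQ by (intro of_real_hom.mat_hom_mult[of _ m m _ m]) auto
  finally have Rc: "?h R = ?h P * ?h D * ?h Q" using w(4) by simp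
  have QPc: "?h Q * ?h P = 1\<^sub>m m"
    using w(3) PQ n by (metis of_real_hom.mat_hom_mult of_real_hom.mat_hom_one)
  have PQc: "?h P * ?h Q = 1\<^sub>m m"
    using w(2) PQ n by (metis of_real_hom.mat_hom_mult of_real_hom.mat_hom_one)
  have Dc: "?h D \<in> carrier_mat m m" "diagonal_mat (?h D)" using PQ D by (auto simp: diagonal_mat_def)
  define as where "as = map (\<lambda>i. ?h D $$ (i,i)) [0..<m]"
  have "\<forall>v\<in>carrier_vec m. iterA (?h R) as v = 0\<^sub>v m"
  proof
    fix v :: "complex vec" assume v: "v \<in> carrier_vec m"
    have "iterA (?h R) as v = ?h P *\<^sub>v iterA (?h D) as (?h Q *\<^sub>v v)"
      unfolding Rc by (rule iterA_sim, insert PQ QPc PQc v, auto)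
    also have "iterA (?h D) as (?h Q *\<^sub>v v) = 0\<^sub>v m"
      unfolding as_def by (rule ann_diag[OF Dc], insert PQ v, auto)
    finally show "iterA (?h R) as v = 0\<^sub>v m" using PQ by auto
  qed
  moreover have "\<forall>a\<in>set as. Im a = 0" unfolding as_def using PQ by auto
  ultimately show ?thesis by blast
qed


lemma comm_add: assumes "A \<in> carrier_mat m m" "M \<in> carrier_mat m m" "N \<in> carrier_mat m m"
  "A * M = M * A" "A * N = N * A" shows "A * (M + N) = (M + N) * A"
  using assms by (simp add: mult_add_distrib_mat[of A m m] add_mult_distrib_mat[of M m m])

lemma comm_minus: fixes A M N :: "complex mat" assumes "A \<in> carrier_mat m m" "M \<in> carrier_mat m m" "N \<in> carrier_mat m m"
  "A * M = M * A" "A * N = N * A" shows "A * (M - N) = (M - N) * A"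
  using assms by (simp add: mult_minus_distrib_mat[of A m m] minus_mult_distrib_mat[of M m m])

lemma comm_smult: assumes "A \<in> carrier_mat m m" "M \<in> carrier_mat m m"
  "A * M = M * A" shows "A * (c \<cdot>\<^sub>m M) = (c \<cdot>\<^sub>m M) * (A :: complex mat)"
  using assms by (simp add: mult_smult_distrib[of A m m] mult_smult_assoc_mat[of M m m])

lemma comm_mult: assumes A: "A \<in> carrier_mat m m" and M: "M \<in> carrier_mat m m" and N: "N \<in> carrier_mat m m"
  and "A * M = M * A" "A * N = N * A" shows "A * (M * N) = (M * N) * A"
proof -
  have "A * (M * N) = (A * M) * N" using A M N by simp
  also have "\<dots> = M * (A * N)" using assms by simp
  also have "\<dots> = (M * N) * A" using assms by simp
  finally show ?thesis .
qed

lemma comm_one: "(A :: complex mat) \<in> carrier_mat m m \<Longrightarrow> A * 1\<^sub>m m = 1\<^sub>m m * A"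
  by (metis left_mult_one_mat right_mult_one_mat)

lemma eig_closed: assumes A: "A \<in> carrier_mat m m" and M: "M \<in> carrier_mat m m"
  and c: "A * M = M * A" and u: "u \<in> carrier_vec m" and e: "M *\<^sub>v u = \<mu> \<cdot>\<^sub>v u"
  shows "M *\<^sub>v (A *\<^sub>v u - a \<cdot>\<^sub>v u) = \<mu> \<cdot>\<^sub>v (A *\<^sub>v u - (a::complex) \<cdot>\<^sub>v u)"
proof -
  have "M *\<^sub>v (A *\<^sub>v u) = (M * A) *\<^sub>v u" using A M u by simp
  also have "\<dots> = (A * M) *\<^sub>v u" using c by simp
  also have "\<dots> = A *\<^sub>v (M *\<^sub>v u)" using A M u by simp
  also have "\<dots> = \<mu> \<cdot>\<^sub>v (A *\<^sub>v u)" using e A u by (simp add: mult_mat_vec)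
  finally have 1: "M *\<^sub>v (A *\<^sub>v u) = \<mu> \<cdot>\<^sub>v (A *\<^sub>v u)" .
  have 2: "M *\<^sub>v (a \<cdot>\<^sub>v u) = a \<cdot>\<^sub>v (\<mu> \<cdot>\<^sub>v u)" using e M u by (simp add: mult_mat_vec)
  have "M *\<^sub>v (A *\<^sub>v u - a \<cdot>\<^sub>v u) = M *\<^sub>v (A *\<^sub>v u) - M *\<^sub>v (a \<cdot>\<^sub>v u)"
    using M A u by (simp add: mult_minus_distrib_mat_vec[of M m m])
  also have "\<dots> = \<mu> \<cdot>\<^sub>v (A *\<^sub>v u) - a \<cdot>\<^sub>v (\<mu> \<cdot>\<^sub>v u)" using 1 2 by simp
  also have "\<dots> = \<mu> \<cdot>\<^sub>v (A *\<^sub>v u - a \<cdot>\<^sub>v u)"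
    by (rule eq_vecI, insert A u, auto simp: algebra_simps)
  finally show ?thesis .
qed

lemma E_add: assumes "X \<in> carrier_mat m m" "Y \<in> carrier_mat m m" "w \<in> carrier_vec m"
  "X *\<^sub>v w = a \<cdot>\<^sub>v w" "Y *\<^sub>v w = b \<cdot>\<^sub>v w" shows "(X + Y) *\<^sub>v w = (a + b :: complex) \<cdot>\<^sub>v w"
  using assms by (simp add: add_mult_distrib_mat_vec[of X m m] add_smult_distrib_vec)

lemma E_minus: assumes "X \<in> carrier_mat m m" "Y \<in> carrier_mat m m" "w \<in> carrier_vec m"
  "X *\<^sub>v w = a \<cdot>\<^sub>v w" "Y *\<^sub>v w = b \<cdot>\<^sub>v w" shows "(X - Y) *\<^sub>v w = (a - b :: complex) \<cdot>\<^sub>v w"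
proof -
  have "(X - Y) *\<^sub>v w = a \<cdot>\<^sub>v w - b \<cdot>\<^sub>v w"
    using assms by (simp add: minus_mult_distrib_mat_vec[of X m m])
  also have "\<dots> = (a - b) \<cdot>\<^sub>v w" by (rule eq_vecI, insert assms, auto simp: algebra_simps)
  finally show ?thesis .
qed

lemma E_mult: assumes "X \<in> carrier_mat m m" "Y \<in> carrier_mat m m" "w \<in> carrier_vec m"
  "X *\<^sub>v w = a \<cdot>\<^sub>v w" "Y *\<^sub>v w = b \<cdot>\<^sub>v w" shows "(X * Y) *\<^sub>v w = (a * b :: complex) \<cdot>\<^sub>v w"
proof -
  have "(X * Y) *\<^sub>v w = X *\<^sub>v (b \<cdot>\<^sub>v w)" using assms by simp
  also have "\<dots> = b \<cdot>\<^sub>v (a \<cdot>\<^sub>v w)" using assms by (simp add: mult_mat_vec)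
  also have "\<dots> = (a * b) \<cdot>\<^sub>v w" by (simp add: smult_smult_assoc mult.commute)
  finally show ?thesis .
qed

lemma E_smult: assumes "X \<in> carrier_mat m m" "w \<in> carrier_vec m"
  "X *\<^sub>v w = a \<cdot>\<^sub>v w" shows "(c \<cdot>\<^sub>m X) *\<^sub>v w = (c * a :: complex) \<cdot>\<^sub>v w"
proof -
  have "(c \<cdot>\<^sub>m X) *\<^sub>v w = c \<cdot>\<^sub>v (X *\<^sub>v w)"
    by (rule eq_vecI, insert assms(1,2), auto simp: scalar_prod_def sum_distrib_left algebra_simps)
  then show ?thesis using assms by (simp add: smult_smult_assoc)
qed

lemma E_one: "w \<in> carrier_vec m \<Longrightarrow> 1\<^sub>m m *\<^sub>v w = (1::complex) \<cdot>\<^sub>v w" by simp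

lemma smult_cancel: assumes w: "w \<in> carrier_vec m" "w \<noteq> 0\<^sub>v m" and e: "c \<cdot>\<^sub>v w = d \<cdot>\<^sub>v w"
  shows "c = (d::complex)"
proof -
  have "\<exists>i<m. w $ i \<noteq> 0"
  proof (rule ccontr)
    assume "\<not> ?thesis"
    then have "\<forall>i<m. w $ i = 0" by blast
    then have "w = 0\<^sub>v m" using w by (intro eq_vecI) auto
    then show False using w by simp
  qed
  then obtain i where i: "i < m" "w $ i \<noteq> 0" by blast
  have "(c \<cdot>\<^sub>v w) $ i = (d \<cdot>\<^sub>v w) $ i" using e by simp
  then have "c * w $ i = d * w $ i" using i w by simp
  then show ?thesis using i by simp
qed

lemma find_common:
  assumes R: "Rc \<in> carrier_mat m m" and I: "Ic \<in> carrier_mat m m" and M: "M \<in> carrier_mat m m"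
  and annR: "\<exists>as. (\<forall>a\<in>set as. Im a = 0) \<and> (\<forall>v\<in>carrier_vec m. iterA Rc as v = 0\<^sub>v m)"
  and annI: "\<exists>as. (\<forall>a\<in>set as. Im a = 0) \<and> (\<forall>v\<in>carrier_vec m. iterA Ic as v = 0\<^sub>v m)"
  and cRI: "Rc * Ic = Ic * Rc" and cRM: "Rc * M = M * Rc" and cIM: "Ic * M = M * Ic"
  and v: "v \<in> carrier_vec m" "v \<noteq> 0\<^sub>v m" "M *\<^sub>v v = \<mu> \<cdot>\<^sub>v v"
  shows "\<exists>w r s. w \<in> carrier_vec m \<and> w \<noteq> 0\<^sub>v m \<and> M *\<^sub>v w = \<mu> \<cdot>\<^sub>v w \<and>
     Rc *\<^sub>v w = r \<cdot>\<^sub>v w \<and> Ic *\<^sub>v w = s \<cdot>\<^sub>v w \<and> Im r = 0 \<and> Im s = 0"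
proof -
  obtain as1 where as1: "\<forall>a\<in>set as1. Im a = 0" "\<forall>v\<in>carrier_vec m. iterA Rc as1 v = 0\<^sub>v m"
    using annR by blast
  obtain as2 where as2: "\<forall>a\<in>set as2. Im a = 0" "\<forall>v\<in>carrier_vec m. iterA Ic as2 v = 0\<^sub>v m"
    using annI by blast
  obtain r w1 where r: "r \<in> set as1" and w1: "w1 \<in> carrier_vec m" "w1 \<noteq> 0\<^sub>v m"
     "M *\<^sub>v w1 = \<mu> \<cdot>\<^sub>v w1" "Rc *\<^sub>v w1 = r \<cdot>\<^sub>v w1"
    using extract_eig[OF R v(1,2), of "\<lambda>u. M *\<^sub>v u = \<mu> \<cdot>\<^sub>v u" as1] v(3) as1(2) v(1)
      eig_closed[OF R M cRM] by blast
  have cIR: "Ic * Rc = Rc * Ic" using cRI by simp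
  obtain s w where s: "s \<in> set as2" and w: "w \<in> carrier_vec m" "w \<noteq> 0\<^sub>v m"
     "M *\<^sub>v w = \<mu> \<cdot>\<^sub>v w \<and> Rc *\<^sub>v w = r \<cdot>\<^sub>v w" "Ic *\<^sub>v w = s \<cdot>\<^sub>v w"
    using extract_eig[OF I w1(1,2), of "\<lambda>u. M *\<^sub>v u = \<mu> \<cdot>\<^sub>v u \<and> Rc *\<^sub>v u = r \<cdot>\<^sub>v u" as2]
      w1 as2(2) eig_closed[OF I M cIM] eig_closed[OF I R cIR] by blast
  show ?thesis using w r s as1(1) as2(1) by blast
qed
lemma real_ineq: fixes t :: real assumes t: "t \<ge> 0"
  shows "t * \<bar>1 + (1 - t^2)/2\<bar> \<le> 1 \<longleftrightarrow> t \<le> 2"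
proof (cases "t^2 \<le> 3")
  case True
  then have "1 + (1 - t^2)/2 \<ge> 0" by (simp add: field_simps)
  then have a: "\<bar>1 + (1 - t^2)/2\<bar> = 1 + (1 - t^2)/2" by (rule abs_of_nonneg)
  have t2: "t \<le> 2"
  proof (rule ccontr)
    assume "\<not> t \<le> 2"
    then have "2 * 2 < t * t" by (intro mult_strict_mono) auto
    then show False using True by (simp add: power2_eq_square)
  qed
  have id: "(t - 1)^2 * (t + 2) = 2 - t * (3 - t^2)" by (simp add: power2_eq_square algebra_simps)
  have "0 \<le> (t - 1)^2 * (t + 2)" using t by simp
  then have "t * (3 - t^2) \<le> 2" using id by linarith
  moreover have "t * (1 + (1 - t^2)/2) = t * (3 - t^2) / 2" by (simp add: field_simps)
  ultimately have "t * \<bar>1 + (1 - t^2)/2\<bar> \<le> 1" unfolding a by linarith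
  then show ?thesis using t2 by blast
next
  case False
  then have "1 + (1 - t^2)/2 < 0" by (simp add: field_simps)
  then have a: "\<bar>1 + (1 - t^2)/2\<bar> = - (1 + (1 - t^2)/2)" by (rule abs_of_neg)
  have e1: "t * (- (1 + (1 - t^2)/2)) = t * (t^2 - 3) / 2" by (simp add: field_simps)
  have id: "(t - 2) * (t + 1)^2 = t * (t^2 - 3) - 2" by (simp add: power2_eq_square algebra_simps)
  have e2: "(t - 2) * (t + 1)^2 \<le> 0 \<longleftrightarrow> t \<le> 2" using t by (simp add: mult_le_0_iff)
  show ?thesis unfolding a e1 using id e2 by linarith
qed

lemma g_norm: fixes l :: complex
  shows "norm (l * (1 + 1/2 * (1 - cnj l * l))) \<le> 1 \<longleftrightarrow> norm l \<le> 2"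
proof -
  define c where "c = 1 + (1 - (norm l)^2)/2"
  have "cnj l * l = of_real ((norm l)^2)" by (metis complex_norm_square mult.commute of_real_power)
  then have X: "1 + 1/2 * (1 - cnj l * l) = complex_of_real c" by (simp add: c_def)
  have "norm (l * (1 + 1/2 * (1 - cnj l * l))) = norm l * norm (complex_of_real c)"
    unfolding X by (rule norm_mult)
  also have "norm (complex_of_real c) = \<bar>c\<bar>" by (rule norm_of_real)
  finally show ?thesis using real_ineq[of "norm l"] by (simp add: c_def)
qed

definition gfun :: "complex \<Rightarrow> complex" where "gfun l = l * (1 + 1/2 * (1 - cnj l * l))"

lemma main_k:
  assumes Q: "Q \<in> carrier_mat m m" and c2: "conj_mat Q * Q = Q * conj_mat Q"
   and dR: "real_diagonalizable m (re_mat Q)" and dI: "real_diagonalizable m (im_mat Q)"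
  shows "(\<forall>l. eigenvalue Q l \<longrightarrow> eigenvalue (bfecc_symbol m Q (conj_mat Q)) (gfun l)) \<and>
         (\<forall>\<mu>. eigenvalue (bfecc_symbol m Q (conj_mat Q)) \<mu> \<longrightarrow> (\<exists>l. eigenvalue Q l \<and> \<mu> = gfun l))"
proof -
  define Rc where "Rc = map_mat complex_of_real (re_mat Q)"
  define Ic where "Ic = map_mat complex_of_real (im_mat Q)"
  define Qs where "Qs = conj_mat Q"
  define QB where "QB = bfecc_symbol m Q Qs"
  have R: "Rc \<in> carrier_mat m m" "Ic \<in> carrier_mat m m" "Qs \<in> carrier_mat m m"
    using Q by (auto simp: Rc_def Ic_def Qs_def re_mat_def im_mat_def conj_mat_def)
  have QB: "QB \<in> carrier_mat m m" unfolding QB_def bfecc_symbol_def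
    by (intro mult_carrier_mat[OF Q] add_carrier_mat one_carrier_mat smult_carrier_mat
        minus_carrier_mat mult_carrier_mat[OF R(3) Q])
  have Qeq: "Q = Rc + \<i> \<cdot>\<^sub>m Ic"
    by (rule eq_matI) (use Q in \<open>auto simp: Rc_def Ic_def re_mat_def im_mat_def complex_eq_iff\<close>)
  have Qseq: "Qs = Rc + (-\<i>) \<cdot>\<^sub>m Ic"
    by (rule eq_matI) (use Q in \<open>auto simp: Qs_def conj_mat_def Rc_def Ic_def re_mat_def im_mat_def complex_eq_iff\<close>)
  have cRI: "Rc * Ic = Ic * Rc"
  proof (rule eq_matI)
    fix i j assume "i < dim_row (Ic * Rc)" "j < dim_col (Ic * Rc)"
    then have ij: "i < m" "j < m" using R by auto
    have "(Qs * Q) $$ (i,j) = (Q * Qs) $$ (i,j)" using c2 Qs_def by simp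
    then have "(\<Sum>k=0..<m. cnj (Q$$(i,k)) * Q$$(k,j)) = (\<Sum>k=0..<m. Q$$(i,k) * cnj (Q$$(k,j)))"
      using ij Q by (simp add: Qs_def conj_mat_def scalar_prod_def)
    then have e0: "Im (\<Sum>k=0..<m. cnj (Q$$(i,k)) * Q$$(k,j)) = Im (\<Sum>k=0..<m. Q$$(i,k) * cnj (Q$$(k,j)))"
      by simp
    have e1: "Im (\<Sum>k=0..<m. cnj (Q$$(i,k)) * Q$$(k,j)) =
       (\<Sum>k=0..<m. Re (Q$$(i,k)) * Im (Q$$(k,j))) - (\<Sum>k=0..<m. Im (Q$$(i,k)) * Re (Q$$(k,j)))"
      by (simp add: Im_sum sum_subtractf)
    have e2: "Im (\<Sum>k=0..<m. Q$$(i,k) * cnj (Q$$(k,j))) =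
       (\<Sum>k=0..<m. Im (Q$$(i,k)) * Re (Q$$(k,j))) - (\<Sum>k=0..<m. Re (Q$$(i,k)) * Im (Q$$(k,j)))"
      by (simp add: Im_sum sum_subtractf)
    have e: "(\<Sum>k=0..<m. Re (Q$$(i,k)) * Im (Q$$(k,j))) = (\<Sum>k=0..<m. Im (Q$$(i,k)) * Re (Q$$(k,j)))"
      using e0 e1 e2 by linarith
    have "(Rc * Ic) $$ (i,j) = complex_of_real (\<Sum>k=0..<m. Re (Q$$(i,k)) * Im (Q$$(k,j)))"
      using ij Q by (simp add: Rc_def Ic_def re_mat_def im_mat_def scalar_prod_def)
    moreover have "(Ic * Rc) $$ (i,j) = complex_of_real (\<Sum>k=0..<m. Im (Q$$(i,k)) * Re (Q$$(k,j)))"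
      using ij Q by (simp add: Rc_def Ic_def re_mat_def im_mat_def scalar_prod_def)
    ultimately show "(Rc * Ic) $$ (i,j) = (Ic * Rc) $$ (i,j)" using e by simp
  qed (use R in auto)
  have cIR: "Ic * Rc = Rc * Ic" using cRI by simp
  have cRQ: "Rc * Q = Q * Rc" unfolding Qeq
    by (rule comm_add[OF R(1) R(1)], insert R cRI, auto intro: comm_smult)
  have cIQ: "Ic * Q = Q * Ic" unfolding Qeq
    by (rule comm_add[OF R(2) R(1)], insert R cIR, auto intro: comm_smult)
  have cRQs: "Rc * Qs = Qs * Rc" unfolding Qseq
    by (rule comm_add[OF R(1) R(1)], insert R cRI, auto intro: comm_smult)
  have cIQs: "Ic * Qs = Qs * Ic" unfolding Qseq
    by (rule comm_add[OF R(2) R(1)], insert R cIR, auto intro: comm_smult)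
  have cB: "A * QB = QB * A" if A: "A \<in> carrier_mat m m" and c1: "A * Q = Q * A" and c2: "A * Qs = Qs * A" for A
    unfolding QB_def bfecc_symbol_def
    by (intro comm_mult[OF A] comm_add[OF A] comm_smult[OF A] comm_minus[OF A] comm_one[OF A]
        carrier_matI c1 c2, insert Q R, auto)
  have cRB: "Rc * QB = QB * Rc" by (rule cB[OF R(1) cRQ cRQs])
  have cIB: "Ic * QB = QB * Ic" by (rule cB[OF R(2) cIQ cIQs])
  have annR: "\<exists>as. (\<forall>a\<in>set as. Im a = 0) \<and> (\<forall>v\<in>carrier_vec m. iterA Rc as v = 0\<^sub>v m)"
    unfolding Rc_def by (rule ann_real_diag[OF dR])
  have annI: "\<exists>as. (\<forall>a\<in>set as. Im a = 0) \<and> (\<forall>v\<in>carrier_vec m. iterA Ic as v = 0\<^sub>v m)"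
    unfolding Ic_def by (rule ann_real_diag[OF dI])
  have key: "Q *\<^sub>v w = (r + \<i> * s) \<cdot>\<^sub>v w \<and> QB *\<^sub>v w = gfun (r + \<i> * s) \<cdot>\<^sub>v w"
    if w: "w \<in> carrier_vec m" and er: "Rc *\<^sub>v w = r \<cdot>\<^sub>v w" and es: "Ic *\<^sub>v w = s \<cdot>\<^sub>v w"
      and rs: "Im r = 0" "Im s = 0" for w r s
  proof -
    have EQ: "Q *\<^sub>v w = (r + \<i> * s) \<cdot>\<^sub>v w" unfolding Qeq
      by (rule E_add[OF R(1) _ w er E_smult[OF R(2) w es]], insert R, auto)
    have "Qs *\<^sub>v w = (r + (-\<i>) * s) \<cdot>\<^sub>v w" unfolding Qseq
      by (rule E_add[OF R(1) _ w er E_smult[OF R(2) w es]], insert R, auto)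
    moreover have "r + (-\<i>) * s = cnj (r + \<i> * s)" using rs by (simp add: complex_eq_iff)
    ultimately have EQs: "Qs *\<^sub>v w = cnj (r + \<i> * s) \<cdot>\<^sub>v w" by simp
    define l where "l = r + \<i> * s"
    have EQ': "Q *\<^sub>v w = l \<cdot>\<^sub>v w" using EQ l_def by simp
    have EQs': "Qs *\<^sub>v w = cnj l \<cdot>\<^sub>v w" using EQs l_def by simp
    have O: "1\<^sub>m m *\<^sub>v w = 1 \<cdot>\<^sub>v w" using E_one[OF w] .
    have C0: "Qs * Q \<in> carrier_mat m m" by (rule mult_carrier_mat[OF R(3) Q])
    have C1: "1\<^sub>m m - Qs * Q \<in> carrier_mat m m" by (intro minus_carrier_mat one_carrier_mat C0)
    have C2: "(1/2::complex) \<cdot>\<^sub>m (1\<^sub>m m - Qs * Q) \<in> carrier_mat m m" by (intro smult_carrier_mat C1)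
    have C3: "1\<^sub>m m + (1/2::complex) \<cdot>\<^sub>m (1\<^sub>m m - Qs * Q) \<in> carrier_mat m m"
      by (intro add_carrier_mat one_carrier_mat C2)
    have a1: "(Qs * Q) *\<^sub>v w = (cnj l * l) \<cdot>\<^sub>v w" by (rule E_mult[OF R(3) Q w EQs' EQ'])
    have a2: "(1\<^sub>m m - Qs * Q) *\<^sub>v w = (1 - cnj l * l) \<cdot>\<^sub>v w"
      by (rule E_minus[OF one_carrier_mat C0 w O a1])
    have a3: "((1/2::complex) \<cdot>\<^sub>m (1\<^sub>m m - Qs * Q)) *\<^sub>v w = (1/2 * (1 - cnj l * l)) \<cdot>\<^sub>v w"
      by (rule E_smult[OF C1 w a2])
    have a4: "(1\<^sub>m m + (1/2::complex) \<cdot>\<^sub>m (1\<^sub>m m - Qs * Q)) *\<^sub>v w = (1 + 1/2 * (1 - cnj l * l)) \<cdot>\<^sub>v w"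
      by (rule E_add[OF one_carrier_mat C2 w O a3])
    have "QB *\<^sub>v w = (l * (1 + 1/2 * (1 - cnj l * l))) \<cdot>\<^sub>v w"
      unfolding QB_def bfecc_symbol_def by (rule E_mult[OF Q C3 w EQ' a4])
    then show ?thesis using EQ by (simp add: gfun_def l_def)
  qed
  show ?thesis
  proof (intro conjI allI impI)
    fix l assume "eigenvalue Q l"
    then obtain v where v: "v \<in> carrier_vec m" "v \<noteq> 0\<^sub>v m" "Q *\<^sub>v v = l \<cdot>\<^sub>v v"
      using Q unfolding eigenvalue_def eigenvector_def by auto
    obtain w r s where w: "w \<in> carrier_vec m" "w \<noteq> 0\<^sub>v m" "Q *\<^sub>v w = l \<cdot>\<^sub>v w"
      "Rc *\<^sub>v w = r \<cdot>\<^sub>v w" "Ic *\<^sub>v w = s \<cdot>\<^sub>v w" "Im r = 0" "Im s = 0"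
      using find_common[OF R(1,2) Q annR annI cRI cRQ cIQ v] by blast
    from key[OF w(1,4,5,6,7)] w(3) have "l = r + \<i> * s" and B: "QB *\<^sub>v w = gfun (r + \<i> * s) \<cdot>\<^sub>v w"
      using smult_cancel[OF w(1,2)] by auto
    then show "eigenvalue (bfecc_symbol m Q (conj_mat Q)) (gfun l)"
      using w QB unfolding eigenvalue_def eigenvector_def QB_def Qs_def by auto
  next
    fix \<mu> assume "eigenvalue (bfecc_symbol m Q (conj_mat Q)) \<mu>"
    then obtain v where v: "v \<in> carrier_vec m" "v \<noteq> 0\<^sub>v m" "QB *\<^sub>v v = \<mu> \<cdot>\<^sub>v v"
      using QB unfolding eigenvalue_def eigenvector_def QB_def Qs_def by auto
    obtain w r s where w: "w \<in> carrier_vec m" "w \<noteq> 0\<^sub>v m" "QB *\<^sub>v w = \<mu> \<cdot>\<^sub>v w"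
      "Rc *\<^sub>v w = r \<cdot>\<^sub>v w" "Ic *\<^sub>v w = s \<cdot>\<^sub>v w" "Im r = 0" "Im s = 0"
      using find_common[OF R(1,2) QB annR annI cRI cRB cIB v] by blast
    from key[OF w(1,4,5,6,7)] w(3) have "\<mu> = gfun (r + \<i> * s)" and B: "Q *\<^sub>v w = (r + \<i> * s) \<cdot>\<^sub>v w"
      using smult_cancel[OF w(1,2)] by auto
    moreover have "eigenvalue Q (r + \<i> * s)"
      using w B Q unfolding eigenvalue_def eigenvector_def by auto
    ultimately show "\<exists>l. eigenvalue Q l \<and> \<mu> = gfun l" by blast
  qed
qed

lemma per_k:
  assumes m: "0 < m" and Q: "Q \<in> carrier_mat m m" and c2: "conj_mat Q * Q = Q * conj_mat Q"
   and dR: "real_diagonalizable m (re_mat Q)" and dI: "real_diagonalizable m (im_mat Q)"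
  shows "\<bar>spectral_radius (bfecc_symbol m Q (conj_mat Q))\<bar> \<le> 1 \<longleftrightarrow> \<bar>spectral_radius Q\<bar> \<le> 2"
proof -
  define QB where "QB = bfecc_symbol m Q (conj_mat Q)"
  have Qs: "conj_mat Q \<in> carrier_mat m m" using Q by (simp add: conj_mat_def)
  have QB: "QB \<in> carrier_mat m m" unfolding QB_def bfecc_symbol_def
    by (intro mult_carrier_mat[OF Q] add_carrier_mat one_carrier_mat smult_carrier_mat
        minus_carrier_mat mult_carrier_mat[OF Qs Q])
  from main_k[OF Q c2 dR dI] have H1: "\<And>l. eigenvalue Q l \<Longrightarrow> eigenvalue QB (gfun l)"
    and H2: "\<And>\<mu>. eigenvalue QB \<mu> \<Longrightarrow> \<exists>l. eigenvalue Q l \<and> \<mu> = gfun l"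
    unfolding QB_def by auto
  obtain l where l: "l \<in> spectrum Q" "spectral_radius Q = norm l"
    using spectral_radius_mem_max(1)[OF Q m] by auto
  obtain \<mu> where mu: "\<mu> \<in> spectrum QB" "spectral_radius QB = norm \<mu>"
    using spectral_radius_mem_max(1)[OF QB m] by auto
  show ?thesis unfolding QB_def[symmetric]
  proof
    assume a: "\<bar>spectral_radius QB\<bar> \<le> 1"
    have "eigenvalue QB (gfun l)" using H1 l(1) by (simp add: spectrum_def)
    then have "norm (gfun l) \<le> spectral_radius QB"
      using spectral_radius_mem_max(2)[OF QB m] by (simp add: spectrum_def)
    then have "norm (gfun l) \<le> 1" using a by simp
    then have "norm l \<le> 2" using g_norm[of l] by (simp add: gfun_def)
    then show "\<bar>spectral_radius Q\<bar> \<le> 2" using l by simp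
  next
    assume a: "\<bar>spectral_radius Q\<bar> \<le> 2"
    obtain l' where l': "eigenvalue Q l'" "\<mu> = gfun l'" using H2 mu(1) by (auto simp: spectrum_def)
    then have "norm l' \<le> spectral_radius Q"
      using spectral_radius_mem_max(2)[OF Q m] by (simp add: spectrum_def)
    then have "norm l' \<le> 2" using a by simp
    then have "norm \<mu> \<le> 1" using g_norm[of l'] l'(2) by (simp add: gfun_def)
    then show "\<bar>spectral_radius QB\<bar> \<le> 1" using mu by simp
  qed
qed

theorem theorem2p1:
  fixes d m :: nat and N :: "nat list" and A :: "nat \<Rightarrow> real mat"
    and QL QLs :: "int list \<Rightarrow> complex mat"
  assumes d: "d \<ge> 1" and lenN: "length N = d" and Npos: "\<forall>i<d. N ! i \<ge> 1"
    and m: "m \<ge> 1"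
    and hyp: "hyperbolic_system d m A"
    and carrL: "\<forall>k\<in>dual_index_set N. QL k \<in> carrier_mat m m"
    and carrLs: "\<forall>k\<in>dual_index_set N. QLs k \<in> carrier_mat m m"
    and c1: "\<forall>k\<in>dual_index_set N. QLs k = conj_mat (QL k)"
    and c2: "\<forall>k\<in>dual_index_set N. QLs k * QL k = QL k * QLs k"
    and c3: "\<forall>k\<in>dual_index_set N. real_diagonalizable m (re_mat (QL k)) \<and>
                                      real_diagonalizable m (im_mat (QL k))"
  shows "(\<forall>k\<in>dual_index_set N. \<bar>spectral_radius (bfecc_symbol m (QL k) (QLs k))\<bar> \<le> 1)
     \<longleftrightarrow> (\<forall>k\<in>dual_index_set N. \<bar>spectral_radius (QL k)\<bar> \<le> 2)"
proof -
  have P: "(\<bar>spectral_radius (bfecc_symbol m (QL k) (QLs k))\<bar> \<le> 1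
          \<longleftrightarrow> \<bar>spectral_radius (QL k)\<bar> \<le> 2)" if k: "k \<in> dual_index_set N" for k
  proof -
    have e: "QLs k = conj_mat (QL k)" using c1 k by blast
    have m0: "0 < m" using m by simp
    have h1: "QL k \<in> carrier_mat m m" using carrL k by blast
    have "QLs k * QL k = QL k * QLs k" using c2 k by blast
    then have h2: "conj_mat (QL k) * QL k = QL k * conj_mat (QL k)" unfolding e .
    have h3: "real_diagonalizable m (re_mat (QL k))" using c3 k by blast
    have h4: "real_diagonalizable m (im_mat (QL k))" using c3 k by blast
    show ?thesis unfolding e by (rule per_k[OF m0 h1 h2 h3 h4])
  qed
  show ?thesis by (rule ball_cong[OF refl P])
qed

end
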